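(* Let $\mathcal{S}=\{S_1,\dots,S_N\}\subseteq 2^{[n]}$ be a nonempty Sperner family ($N\ge1$) and $h:\mathcal{S}\to 2^{[n]}$ a function with $H_i=h(S_i)\subseteq S_i$ for every $i\in[N]$. If $G_{\mathcal{S},h}$ is the complete graph on $N$ vertices, then there exists $S_0\in\mathcal{S}$ such that $\mathcal{Q}_{S_0,h(S_0)}\not\subseteq\bigcup_{S\in\mathcal{S}\setminus\{S_0\}}\mathcal{Q}_{S,h(S)}$.
   Context: $[n]=\{1,\dots,n\}$. A Sperner family is a family of sets none of which is contained in another. For $H\subseteq S\subseteq[n]$, $\mathcal{Q}_{S,H}=\{H\cup B: B\subseteq[n]\setminus S\}$. The graph $G_{\mathcal{S},h}$ has vertex set $\{(S_i,H_i): i\in[N]\}$, and two distinct vertices $(S_i,H_i)$, $(S_j,H_j)$ are adjacent if and only if $S_i\cap H_j=S_j\cap H_i$. *)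

theory Defs
  imports Main
begin

definition Qfam :: "nat \<Rightarrow> nat set \<Rightarrow> nat set \<Rightarrow> nat set set" where
  "Qfam n S H = {H \<union> B | B. B \<subseteq> {1..n} - S}"

definition sperner :: "'a set set \<Rightarrow> bool" where
  "sperner F \<longleftrightarrow> (\<forall>A\<in>F. \<forall>B\<in>F. A \<subseteq> B \<longrightarrow> A = B)"

text \<open>Adjacency in G_{S,h}: distinct vertices (S,h S),(T,h T) adjacent iff S \<inter> h T = T \<inter> h S.\<close>
definition G_adj :: "(nat set \<Rightarrow> nat set) \<Rightarrow> nat set \<Rightarrow> nat set \<Rightarrow> bool" where
  "G_adj h S T \<longleftrightarrow> S \<inter> h T = T \<inter> h S"

definition G_complete :: "nat set set \<Rightarrow> (nat set \<Rightarrow> nat set) \<Rightarrow> bool" where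
  "G_complete F h \<longleftrightarrow> (\<forall>S\<in>F. \<forall>T\<in>F. S \<noteq> T \<longrightarrow> G_adj h S T)"

end

theory Submission
  imports Defs
begin

theorem claim20:
  fixes n :: nat and F :: "nat set set" and h :: "nat set \<Rightarrow> nat set"
  assumes "F \<noteq> {}"
    and "\<forall>S\<in>F. S \<subseteq> {1..n}"
    and "sperner F"
    and "\<forall>S\<in>F. h S \<subseteq> S"
    and "G_complete F h"
  shows "\<exists>S0\<in>F. \<not> (Qfam n S0 (h S0) \<subseteq> (\<Union>S\<in>F - {S0}. Qfam n S (h S)))"
proof -
  obtain S0 where S0: "S0 \<in> F" using assms(1) by blast
  define H where "H = \<Union>(h ` F)"
  define X where "X = h S0 \<union> (({1..n} - S0) - H)"
  have XQ: "X \<in> Qfam n S0 (h S0)" unfolding Qfam_def X_def by blast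
  have "X \<notin> Qfam n S (h S)" if S: "S \<in> F" "S \<noteq> S0" for S
  proof
    assume "X \<in> Qfam n S (h S)"
    then obtain B where B: "X = h S \<union> B" "B \<subseteq> {1..n} - S" unfolding Qfam_def by blast
    have "\<not> S \<subseteq> S0" using assms(3) S S0 unfolding sperner_def by blast
    then obtain x where x: "x \<in> S" "x \<notin> S0" by blast
    have xn: "x \<in> {1..n}" using x S assms(2) by blast
    show False
    proof (cases "x \<in> H")
      case True
      then obtain T where T: "T \<in> F" "x \<in> h T" unfolding H_def by blast
      have "x \<in> h S"
      proof (cases "T = S")
        case True then show ?thesis using T by simp
      next
        case False
        then have "S \<inter> h T = T \<inter> h S" using assms(5) S T unfolding G_complete_def G_adj_def by blast
        then show ?thesis using x T by blast
      qed
      then have "x \<in> X" using B by blast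
      moreover have "x \<notin> h S0" using x assms(4) S0 by blast
      ultimately show False using True unfolding X_def by blast
    next
      case False
      then have "x \<notin> h S" using S unfolding H_def by blast
      then have "x \<notin> X" using B x by blast
      then show False using False x xn unfolding X_def by blast
    qed
  qed
  then show ?thesis using S0 XQ by blast
qed

end
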